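(* Let $D=\{\mathbf{v}_1,\dots,\mathbf{v}_q\}\subset\mathbb{R}^{d}$ with all coordinates in $[-\sqrt{2/d},\sqrt{2/d}]$, let $\eta>0$ with $2/\eta$ an integer, and let $D_Q$ be the randomized quantization of $D$ described in the context. Then for each $i\in[d]$, $\mathbb{E}[w(D_Q,i)]=\sqrt{d/2}\,w(D,i)$, and with probability at least $1-2d\exp(-q/4)$, $\left|\frac1q\sqrt{\tfrac2d}\,w(D_Q,i)-\frac1q w(D,i)\right|\le\eta.$
   Context: $S=\{-1,-1+\eta,\dots,1-\eta,1\}$. For $x\in[-1,1]$ let $k=\lfloor (x+1)/\eta\rfloor$ and let the random quantizer be $Q(x)=-1+k\eta$ with probability $\frac{(k+1)\eta-1-x}{\eta}$ and $Q(x)=-1+(k+1)\eta$ with probability $\frac{x+1-k\eta}{\eta}$, applied independently to each coordinate. $D_Q=\{\tilde v_j=Q(\sqrt{d/2}\,\mathbf{v}_j)\}_{j=1}^q$, $w(D_Q,i)=\sum_{j=1}^q\tilde v_{ji}$ and $w(D,i)=\sum_{j=1}^q v_{ji}$. *)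

theory Defs
  imports "HOL-Probability.Probability"
begin

text \<open>Randomized quantizer onto the grid S = {-1, -1+eta, ..., 1} for x in [-1,1]:
  with k = floor((x+1)/eta), output -1 + k*eta with probability ((k+1)eta - 1 - x)/eta
  and -1 + (k+1)*eta with probability (x + 1 - k eta)/eta.\<close>
definition quant_pmf :: "real \<Rightarrow> real \<Rightarrow> real pmf" where
  "quant_pmf eta x =
     (let k = real_of_int \<lfloor>(x + 1) / eta\<rfloor> in
      map_pmf (\<lambda>b. if b then -1 + (k + 1) * eta else -1 + k * eta)
        (bernoulli_pmf ((x + 1 - k * eta) / eta)))"

text \<open>Distribution of the quantized dataset D_Q: the data set D = {v_1..v_q} in R^d is
  given as v j i (j < q vector index, i < d coordinate); the quantized data set is a
  function on {..<q} x {..<d}, each entry quantized independently.\<close>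
definition quantized_data :: "real \<Rightarrow> nat \<Rightarrow> nat \<Rightarrow> (nat \<Rightarrow> nat \<Rightarrow> real) \<Rightarrow> (nat \<times> nat \<Rightarrow> real) pmf" where
  "quantized_data eta q d v =
     Pi_pmf ({..<q} \<times> {..<d}) 0 (\<lambda>(j, i). quant_pmf eta (sqrt (real d / 2) * v j i))"

definition w_data :: "nat \<Rightarrow> (nat \<Rightarrow> nat \<Rightarrow> real) \<Rightarrow> nat \<Rightarrow> real" where
  "w_data q v i = (\<Sum>j<q. v j i)"

definition w_quant :: "nat \<Rightarrow> (nat \<times> nat \<Rightarrow> real) \<Rightarrow> nat \<Rightarrow> real" where
  "w_quant q vt i = (\<Sum>j<q. vt (j, i))"

end

theory Submission
  imports Defs "HOL-Probability.Probability"
begin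

lemma quant_facts:
  fixes eta x :: real
  assumes eta: "eta > 0"
  defines "L \<equiv> -1 + real_of_int \<lfloor>(x + 1) / eta\<rfloor> * eta"
  shows "L \<le> x" "x \<le> L + eta"
    "\<And>y. y \<in> set_pmf (quant_pmf eta x) \<Longrightarrow> L \<le> y \<and> y \<le> L + eta"
    "measure_pmf.expectation (quant_pmf eta x) (\<lambda>y. y) = x"
    "finite (set_pmf (quant_pmf eta x))"
proof -
  define k where "k = real_of_int \<lfloor>(x + 1) / eta\<rfloor>"
  have k1: "k \<le> (x + 1) / eta" unfolding k_def by linarith
  have k2: "(x + 1) / eta < k + 1" unfolding k_def by linarith
  have a: "k * eta \<le> x + 1" using k1 eta by (simp add: field_simps)
  have b: "x + 1 < (k + 1) * eta" using k2 eta by (simp add: field_simps)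
  have L: "L = -1 + k * eta" unfolding L_def k_def by simp
  show "L \<le> x" using a L by simp
  show "x \<le> L + eta" using b L by (simp add: algebra_simps)
  have Q: "quant_pmf eta x = map_pmf (\<lambda>b. if b then -1 + (k + 1) * eta else -1 + k * eta)
        (bernoulli_pmf ((x + 1 - k * eta) / eta))"
    unfolding quant_pmf_def k_def Let_def by simp
  show "\<And>y. y \<in> set_pmf (quant_pmf eta x) \<Longrightarrow> L \<le> y \<and> y \<le> L + eta"
    unfolding Q L using eta by (auto simp: algebra_simps)
  show "finite (set_pmf (quant_pmf eta x))" unfolding Q by simp
  have p0: "0 \<le> (x + 1 - k * eta) / eta" using a eta by simp
  have p1: "(x + 1 - k * eta) / eta \<le> 1" using b eta by (simp add: field_simps)
  have "measure_pmf.expectation (quant_pmf eta x) (\<lambda>y. y)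
     = (-1 + (k + 1) * eta) * ((x + 1 - k * eta) / eta) + (-1 + k * eta) * (1 - (x + 1 - k * eta) / eta)"
    unfolding Q integral_map_pmf using p0 p1 by simp
  also have "\<dots> = x" using eta by (simp add: field_simps)
  finally show "measure_pmf.expectation (quant_pmf eta x) (\<lambda>y. y) = x" .
qed

theorem lemma2:
  fixes q d :: nat and v :: "nat \<Rightarrow> nat \<Rightarrow> real" and eta :: real
  assumes "d \<ge> 1"
    and "\<And>j i. j < q \<Longrightarrow> i < d \<Longrightarrow> \<bar>v j i\<bar> \<le> sqrt (2 / real d)"
    and "eta > 0"
    and "\<exists>n::nat. 2 / eta = real n"
  shows "(\<forall>i<d. measure_pmf.expectation (quantized_data eta q d v) (\<lambda>vt. w_quant q vt i)
                 = sqrt (real d / 2) * w_data q v i)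
       \<and> measure_pmf.prob (quantized_data eta q d v)
           {vt. \<forall>i<d. \<bar>(1 / real q) * sqrt (2 / real d) * w_quant q vt i
                        - (1 / real q) * w_data q v i\<bar> \<le> eta}
         \<ge> 1 - 2 * real d * exp (- real q / 4)"
proof -
  note eta = assms(3)
  define c where "c = sqrt (real d / 2)"
  define P where "P = quantized_data eta q d v"
  define A where "A = {..<q} \<times> {..<d}"
  have finA: "finite A" unfolding A_def by simp
  have PP: "P = Pi_pmf A 0 (\<lambda>(j, i). quant_pmf eta (c * v j i))"
    unfolding P_def quantized_data_def A_def c_def by simp
  have comp: "map_pmf (\<lambda>vt. vt (j, i)) P = quant_pmf eta (c * v j i)" if "j < q" "i < d" for j i
    unfolding PP using that by (subst Pi_pmf_component[OF finA]) (auto simp: A_def)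
  have setP: "vt (j, i) \<in> set_pmf (quant_pmf eta (c * v j i))"
    if "vt \<in> set_pmf P" "j < q" "i < d" for vt j i
  proof -
    have "vt (j, i) \<in> set_pmf (map_pmf (\<lambda>vt. vt (j, i)) P)" using that(1) by simp
    then show ?thesis using comp[OF that(2,3)] by simp
  qed
  have bnd: "\<bar>vt (j, i) - c * v j i\<bar> \<le> eta" if "vt \<in> set_pmf P" "j < q" "i < d" for vt j i
  proof -
    have y: "vt (j, i) \<in> set_pmf (quant_pmf eta (c * v j i))" using setP[OF that] .
    show ?thesis
      using quant_facts(1,2)[OF eta, where x = "c * v j i"]
        quant_facts(3)[OF eta y] by (simp add: abs_le_iff)
  qed
  have intg: "integrable (measure_pmf P) (\<lambda>vt. vt (j, i))" if "j < q" "i < d" for j i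
  proof -
    have "integrable (measure_pmf (map_pmf (\<lambda>vt. vt (j, i)) P)) (\<lambda>y. y)"
      unfolding comp[OF that] by (rule integrable_measure_pmf_finite) (rule quant_facts(5)[OF eta])
    then show ?thesis by simp
  qed
  have exp1: "measure_pmf.expectation P (\<lambda>vt. vt (j, i)) = c * v j i" if "j < q" "i < d" for j i
  proof -
    have "measure_pmf.expectation P (\<lambda>vt. vt (j, i))
        = measure_pmf.expectation (map_pmf (\<lambda>vt. vt (j, i)) P) (\<lambda>y. y)"
      by (simp add: integral_map_pmf)
    also have "\<dots> = c * v j i" unfolding comp[OF that] by (rule quant_facts(4)[OF eta])
    finally show ?thesis .
  qed
  have d0: "real d > 0" using assms(1) by simp
  have cs: "sqrt (2 / real d) * c = 1"
    unfolding c_def using d0 by (simp add: real_sqrt_mult[symmetric])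
  have key: "(1 / real q) * sqrt (2 / real d) * w_quant q vt i - (1 / real q) * w_data q v i
      = (1 / real q) * sqrt (2 / real d) * (\<Sum>j<q. vt (j, i) - c * v j i)" for vt i
  proof -
    have "w_data q v i = (\<Sum>j<q. sqrt (2 / real d) * (c * v j i))"
      unfolding w_data_def using cs by (simp add: mult.assoc[symmetric])
    then show ?thesis unfolding w_quant_def
      by (simp add: sum_subtractf sum_distrib_left sum_divide_distrib algebra_simps)
  qed
  have part1: "\<forall>i<d. measure_pmf.expectation P (\<lambda>vt. w_quant q vt i) = c * w_data q v i"
  proof (intro allI impI)
    fix i assume i: "i < d"
    have "measure_pmf.expectation P (\<lambda>vt. w_quant q vt i)
        = (\<Sum>j<q. measure_pmf.expectation P (\<lambda>vt. vt (j, i)))"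
      unfolding w_quant_def using intg i by (intro Bochner_Integration.integral_sum) auto
    also have "\<dots> = (\<Sum>j<q. c * v j i)" using exp1 i by simp
    finally show "measure_pmf.expectation P (\<lambda>vt. w_quant q vt i) = c * w_data q v i"
      unfolding w_data_def by (simp add: sum_distrib_left)
  qed
  define G where "G = {vt. \<forall>i<d. \<bar>(1 / real q) * sqrt (2 / real d) * w_quant q vt i
                        - (1 / real q) * w_data q v i\<bar> \<le> eta}"
  have det: "\<bar>(1 / real q) * sqrt (2 / real d) * w_quant q vt i - (1 / real q) * w_data q v i\<bar>
      \<le> sqrt (2 / real d) * eta" if "vt \<in> set_pmf P" "i < d" for vt i
  proof -
    have "\<bar>\<Sum>j<q. vt (j, i) - c * v j i\<bar> \<le> (\<Sum>j<q. eta)"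
      using bnd[OF that(1) _ that(2)] by (intro order.trans[OF sum_abs] sum_mono) auto
    then have s: "\<bar>\<Sum>j<q. vt (j, i) - c * v j i\<bar> \<le> real q * eta" by simp
    show ?thesis
    proof (cases "q = 0")
      case True then show ?thesis using eta by (simp add: w_quant_def w_data_def)
    next
      case False
      have "\<bar>(1 / real q) * sqrt (2 / real d) * (\<Sum>j<q. vt (j, i) - c * v j i)\<bar>
          = (1 / real q) * sqrt (2 / real d) * \<bar>\<Sum>j<q. vt (j, i) - c * v j i\<bar>"
        by (simp add: abs_mult)
      also have "\<dots> \<le> (1 / real q) * sqrt (2 / real d) * (real q * eta)"
        by (intro mult_left_mono s) auto
      also have "\<dots> = sqrt (2 / real d) * eta" using False by simp
      finally show ?thesis unfolding key .
    qed
  qed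
  have part2: "measure_pmf.prob P G \<ge> 1 - 2 * real d * exp (- real q / 4)"
  proof (cases "d \<ge> 2 \<or> q = 0")
    case True
    have "AE vt in measure_pmf P. vt \<in> G"
    proof (rule AE_pmfI)
      fix vt assume vt: "vt \<in> set_pmf P"
      show "vt \<in> G" unfolding G_def
      proof (intro CollectI allI impI)
        fix i assume i: "i < d"
        show "\<bar>(1 / real q) * sqrt (2 / real d) * w_quant q vt i - (1 / real q) * w_data q v i\<bar> \<le> eta"
        proof (cases "q = 0")
          case True then show ?thesis using eta by (simp add: w_quant_def w_data_def)
        next
          case False
          then have "d \<ge> 2" using \<open>d \<ge> 2 \<or> q = 0\<close> by simp
          then have "sqrt (2 / real d) \<le> 1" by simp
          then have "sqrt (2 / real d) * eta \<le> eta" using eta by simp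
          then show ?thesis using det[OF vt i] by linarith
        qed
      qed
    qed
    then have "measure_pmf.prob P G = 1" by (simp add: measure_pmf.prob_eq_1)
    moreover have "0 \<le> 2 * real d * exp (- real q / 4)" by simp
    ultimately show ?thesis by linarith
  next
    case False
    then have d1: "d = 1" and q0: "q > 0" using assms(1) by auto
    have AI: "A = {..<q} \<times> {..<(1::nat)}" unfolding A_def d1 ..
    define X where "X = (\<lambda>(j::nat, i::nat) (vt::nat \<times> nat \<Rightarrow> real). vt (j, i) - c * v j i)"
    define a where "a = (\<lambda>(j::nat, i::nat). -1 + real_of_int \<lfloor>(c * v j i + 1) / eta\<rfloor> * eta - c * v j i)"
    define b where "b = (\<lambda>p. a p + eta)"
    have indep0: "prob_space.indep_vars (measure_pmf P) (\<lambda>_. count_space UNIV) (\<lambda>x f. f x) A"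
      unfolding PP by (rule indep_vars_Pi_pmf[OF finA])
    have indep: "prob_space.indep_vars (measure_pmf P) (\<lambda>_. borel) X A"
    proof -
      have "prob_space.indep_vars (measure_pmf P) (\<lambda>_. borel)
          (\<lambda>p x. (\<lambda>y. y - c * v (fst p) (snd p)) (x p)) A"
        by (rule prob_space.indep_vars_compose2[OF measure_pmf.prob_space_axioms indep0]) simp
      moreover have "(\<lambda>p x. (\<lambda>y. y - c * v (fst p) (snd p)) (x p)) = X"
        unfolding X_def by (auto simp: fun_eq_iff)
      ultimately show ?thesis by simp
    qed
    have expX: "measure_pmf.expectation P (X p) = 0" if pA: "p \<in> A" for p
    proof -
      obtain j i where p: "p = (j, i)" and j: "j < q" and i: "i < d" using pA unfolding A_def by auto
      have "measure_pmf.expectation P (X p) = measure_pmf.expectation P (\<lambda>vt. vt (j, i)) - c * v j i"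
        unfolding p X_def using intg[OF j i] by (simp add: Bochner_Integration.integral_diff)
      then show ?thesis using exp1[OF j i] by simp
    qed
    interpret H: Hoeffding_ineq "measure_pmf P" A X a b 0
    proof unfold_locales
      show "finite A" by (rule finA)
      show "prob_space.indep_vars (measure_pmf P) (\<lambda>_. borel) X A" by (rule indep)
      show "AE x in measure_pmf P. X p x \<in> {a p..b p}" if pA2: "p \<in> A" for p
      proof (rule AE_pmfI)
        fix vt assume vt: "vt \<in> set_pmf P"
        obtain j i where p: "p = (j, i)" and j: "j < q" and i: "i < d" using pA2 unfolding A_def by auto
        have y: "vt (j, i) \<in> set_pmf (quant_pmf eta (c * v j i))" using setP[OF vt j i] .
        show "X p vt \<in> {a p..b p}"
          using quant_facts(3)[OF eta y] unfolding p X_def a_def b_def by simp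
      qed
    qed (use expX in simp)
    define \<epsilon> where "\<epsilon> = real q * eta / sqrt 2"
    have cardA: "card A = q" unfolding AI by simp
    have sumba: "(\<Sum>p\<in>A. (b p - a p)\<^sup>2) = real q * eta\<^sup>2" unfolding b_def using cardA by simp
    have eps0: "\<epsilon> \<ge> 0" unfolding \<epsilon>_def using eta by simp
    have pos: "(\<Sum>p\<in>A. (b p - a p)\<^sup>2) > 0" unfolding sumba using q0 eta by simp
    define Bad where "Bad = {x \<in> space (measure_pmf P). \<bar>(\<Sum>p\<in>A. X p x) - 0\<bar> \<ge> \<epsilon>}"
    have hoef: "measure_pmf.prob P Bad \<le> 2 * exp (-2 * \<epsilon>\<^sup>2 / (\<Sum>p\<in>A. (b p - a p)\<^sup>2))"
      unfolding Bad_def by (rule H.Hoeffding_ineq_abs_ge[OF eps0 pos])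
    have e2: "\<epsilon>\<^sup>2 = (real q)\<^sup>2 * eta\<^sup>2 / 2" unfolding \<epsilon>_def by (simp add: power_divide power_mult_distrib)
    have expo: "-2 * \<epsilon>\<^sup>2 / (\<Sum>p\<in>A. (b p - a p)\<^sup>2) = - real q"
      unfolding sumba e2 using q0 eta by (simp add: field_simps power2_eq_square)
    have sumA: "(\<Sum>p\<in>A. f p) = (\<Sum>j<q. f (j, 0))" for f :: "nat \<times> nat \<Rightarrow> real"
    proof -
      have "A = (\<lambda>j. (j, 0)) ` {..<q}" unfolding AI by auto
      moreover have "inj_on (\<lambda>j::nat. (j, 0::nat)) {..<q}" by (auto simp: inj_on_def)
      ultimately show ?thesis by (simp add: sum.reindex)
    qed
    have sub: "UNIV - Bad \<subseteq> G"
    proof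
      fix vt assume "vt \<in> UNIV - Bad"
      then have lt: "\<bar>\<Sum>j<q. vt (j, 0) - c * v j 0\<bar> < \<epsilon>"
        unfolding Bad_def sumA X_def by auto
      show "vt \<in> G" unfolding G_def
      proof (intro CollectI allI impI)
        fix i assume "i < d"
        then have i0: "i = 0" using d1 by simp
        have "\<bar>(1 / real q) * sqrt (2 / real d) * (\<Sum>j<q. vt (j, i) - c * v j i)\<bar>
            = (sqrt 2 / real q) * \<bar>\<Sum>j<q. vt (j, 0) - c * v j 0\<bar>"
          unfolding i0 d1 by (simp add: abs_mult)
        also have "\<dots> \<le> (sqrt 2 / real q) * \<epsilon>"
          using lt by (intro mult_left_mono) auto
        also have "\<dots> = eta" unfolding \<epsilon>_def using q0 by simp
        finally show "\<bar>(1 / real q) * sqrt (2 / real d) * w_quant q vt i - (1 / real q) * w_data q v i\<bar> \<le> eta"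
          unfolding key .
      qed
    qed
    have "measure_pmf.prob P G \<ge> measure_pmf.prob P (UNIV - Bad)"
      using sub by (intro measure_pmf.finite_measure_mono) auto
    moreover have "measure_pmf.prob P (UNIV - Bad) = 1 - measure_pmf.prob P Bad"
      using measure_pmf.prob_compl[of Bad P] by simp
    moreover have ex: "exp (- real q) \<le> exp (- real q / 4)" by simp
    ultimately show ?thesis using hoef ex unfolding expo d1 by linarith
  qed
  show ?thesis using part1 part2 unfolding P_def G_def c_def by simp
qed

end
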